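(* Let $m,k\in\mathbb{N}$ and let $\alpha\in\mathbb{C}$ with $\alpha,\ 2+\alpha+2m+k,\ 2+\alpha+2m\notin\mathbb{Z}_0^-$. Then \[ {}_3F_2\left[\begin{array}{r} -2m-1,\ \alpha,\ 2+\alpha+2m+k;\\ -2m-k-1,\ 2+\alpha+2m;\end{array}1\right]_{2m+1}=\frac{(1+\alpha)(2+2k+\alpha+4m)(2+\alpha)_{2m}\left(1+\frac{\alpha}{2}+k\right)_{2m}}{(2+\alpha)(1+2m+k)\left(2+\frac{\alpha}{2}\right)_{2m}(1+k)_{2m}}. \]
   Context: $\mathbb{N}=\{1,2,3,\dots\}$, $\mathbb{Z}_0^-=\{0,-1,-2,\dots\}$. For $a\in\mathbb{C}$ and $n\in\mathbb{N}_0$, $(a)_0=1$ and $(a)_n=a(a+1)\cdots(a+n-1)$. For $N\in\mathbb{N}_0$, ${}_3F_2\left[\begin{array}{r} a_1,a_2,a_3;\\ b_1,b_2;\end{array}z\right]_N=\sum_{n=0}^{N}\frac{(a_1)_n(a_2)_n(a_3)_n}{(b_1)_n(b_2)_n}\frac{z^n}{n!}$ (the sum of the first $N+1$ terms), defined whenever $(b_1)_n(b_2)_n\neq0$ for $0\le n\le N$. *)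

theory Defs
  imports Complex_Main
begin

definition hyp3F2_trunc :: "complex \<Rightarrow> complex \<Rightarrow> complex \<Rightarrow> complex \<Rightarrow> complex \<Rightarrow> complex \<Rightarrow> nat \<Rightarrow> complex" where
  "hyp3F2_trunc a1 a2 a3 b1 b2 z N =
     (\<Sum>n=0..N. pochhammer a1 n * pochhammer a2 n * pochhammer a3 n
        / (pochhammer b1 n * pochhammer b2 n) * z ^ n / of_nat (fact n))"

definition nonpos_int :: "complex \<Rightarrow> bool" where
  "nonpos_int z \<longleftrightarrow> (\<exists>n::nat. z = - of_nat n)"

end

theory Submission
  imports Defs
begin


lemma poch_shift: "pochhammer (a+1) n * a = pochhammer a n * (a + of_nat n)"
  for a :: "'a::comm_semiring_1"
  using pochhammer_rec[of a n] pochhammer_rec'[of a n] by (simp add: mult.commute)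

lemma shift_neg: "(\<alpha>::complex) + of_nat c = - of_nat j \<Longrightarrow> \<alpha> = - of_nat (j + c)"
  by (metis add_diff_cancel_right' diff_conv_add_uminus minus_add_distrib of_nat_add)

lemma nz: "\<forall>j::nat. \<alpha> \<noteq> - of_nat j \<Longrightarrow> (\<alpha>::complex) + of_nat c \<noteq> 0"
  using shift_neg[of \<alpha> c 0] by auto

definition tt :: "complex \<Rightarrow> nat \<Rightarrow> nat \<Rightarrow> nat \<Rightarrow> complex" where
 "tt \<alpha> N k n = pochhammer (- of_nat N) n * pochhammer \<alpha> n * pochhammer (1+\<alpha>+of_nat N+of_nat k) n
    / (pochhammer (- of_nat N - of_nat k) n * pochhammer (1+\<alpha>+of_nat N) n) / of_nat (fact n)"

definition SS where "SS \<alpha> N k = (\<Sum>n=0..N. tt \<alpha> N k n)"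

lemma np: fixes \<alpha> :: complex assumes "\<forall>j::nat. \<alpha> \<noteq> - of_nat j"
  shows "pochhammer (1+\<alpha>+of_nat N) n \<noteq> 0"
proof
  assume "pochhammer (1+\<alpha>+of_nat N) n = 0"
  then have "\<exists>j<n. 1+\<alpha>+of_nat N = - of_nat j" by (simp only: pochhammer_eq_0_iff)
  then obtain j where "1+\<alpha>+of_nat N = - of_nat j" by blast
  then have "\<alpha> + of_nat (1+N) = - of_nat j" by (simp add: algebra_simps)
  then have "\<alpha> = - of_nat (j+(1+N))" by (rule shift_neg)
  with assms show False by blast
qed

lemma nq: assumes "n \<le> N + k"
  shows "pochhammer (- of_nat N - of_nat k :: complex) n \<noteq> 0"
proof
  assume "pochhammer (- of_nat N - of_nat k :: complex) n = 0"
  then obtain j where j: "j < n" "(- of_nat N - of_nat k :: complex) = - of_nat j" by (auto simp: pochhammer_eq_0_iff)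
  then have "(of_nat (N+k) :: complex) = of_nat j" by (simp add: algebra_simps)
  then have "N + k = j" using of_nat_eq_iff by blast
  with j assms show False by simp
qed

lemma LZ: "tt \<alpha> N k (Suc N) = 0"
  by (simp add: tt_def pochhammer_eq_0_iff)

lemma LA: assumes "\<forall>j::nat. \<alpha> \<noteq> - of_nat j" "n < N"
  shows "tt \<alpha> N k (Suc n) * ((of_nat n + 1) * (1+\<alpha>+of_nat N+of_nat n) * (of_nat n - of_nat N - of_nat k))
     = tt \<alpha> N k n * ((of_nat n - of_nat N) * (\<alpha> + of_nat n) * (1+\<alpha>+of_nat N+of_nat k+of_nat n))"
proof -
  have q1: "pochhammer (- of_nat N - of_nat k :: complex) n \<noteq> 0" using assms by (intro nq) simp
  have q2: "pochhammer (1+\<alpha>+of_nat N) n \<noteq> 0" using np assms(1) by blast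
  have q3: "(of_nat n - of_nat N - of_nat k :: complex) \<noteq> 0"
  proof
    assume "(of_nat n - of_nat N - of_nat k :: complex) = 0"
    then have "(of_nat n :: complex) = of_nat (N+k)" by (simp add: algebra_simps)
    then have "n = N + k" using of_nat_eq_iff by blast
    with assms show False by simp
  qed
  have q4: "(1+\<alpha>+of_nat N+of_nat n) \<noteq> 0"
    using nz[OF assms(1), of "1+N+n"] by (simp add: algebra_simps)
  have f: "(of_nat (fact n) :: complex) \<noteq> 0" by simp
  define P where "P = pochhammer (- of_nat N) n * pochhammer \<alpha> n * pochhammer (1+\<alpha>+of_nat N+of_nat k) n"
  define Q where "Q = (pochhammer (- of_nat N - of_nat k) n * pochhammer (1+\<alpha>+of_nat N) n) * of_nat (fact n)"
  define X where "X = ((of_nat n - of_nat N) * (\<alpha> + of_nat n) * (1+\<alpha>+of_nat N+of_nat k+of_nat n))"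
  define Y where "Y = ((of_nat n + 1) * (1+\<alpha>+of_nat N+of_nat n) * (of_nat n - of_nat N - of_nat k) :: complex)"
  have t0: "tt \<alpha> N k n = P / Q" unfolding tt_def P_def Q_def by simp
  have t1: "tt \<alpha> N k (Suc n) = (P * X) / (Q * Y)" unfolding tt_def P_def Q_def X_def Y_def
    by (simp add: pochhammer_rec' fact_Suc algebra_simps)
  have q5: "(of_nat n + 1 :: complex) \<noteq> 0" using of_nat_neq_0[of n] by (simp add: add.commute)
  have "Q \<noteq> 0" "Y \<noteq> 0" unfolding Q_def Y_def using q1 q2 q3 q4 q5 f by auto
  then show ?thesis unfolding t0 t1 X_def[symmetric] Y_def[symmetric] by (simp add: field_simps)
qed

lemma LB: assumes "\<forall>j::nat. \<alpha> \<noteq> - of_nat j" "n \<le> N"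
  shows "tt \<alpha> N (Suc k) n * ((1+\<alpha>+of_nat N+of_nat k) * (of_nat N + of_nat k + 1))
     = tt \<alpha> N k n * ((1+\<alpha>+of_nat N+of_nat k+of_nat n) * (of_nat N + of_nat k + 1 - of_nat n))"
proof -
  have q1: "pochhammer (- of_nat N - of_nat k :: complex) n \<noteq> 0" using assms by (intro nq) simp
  have q1': "pochhammer (- of_nat N - of_nat (Suc k) :: complex) n \<noteq> 0" using assms by (intro nq) simp
  have q2: "pochhammer (1+\<alpha>+of_nat N) n \<noteq> 0" using np assms(1) by blast
  have q3: "(of_nat n - of_nat N - of_nat k - 1 :: complex) \<noteq> 0"
  proof
    assume "(of_nat n - of_nat N - of_nat k - 1 :: complex) = 0"
    then have "(of_nat n :: complex) = of_nat (N+k+1)" by (simp add: algebra_simps)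
    then have "n = N + k + 1" using of_nat_eq_iff by blast
    with assms show False by simp
  qed
  have s1: "pochhammer (1+\<alpha>+of_nat N+of_nat (Suc k)) n * (1+\<alpha>+of_nat N+of_nat k)
      = pochhammer (1+\<alpha>+of_nat N+of_nat k) n * (1+\<alpha>+of_nat N+of_nat k+of_nat n)"
    using poch_shift[of "1+\<alpha>+of_nat N+of_nat k" n] by (simp add: algebra_simps)
  have s2: "pochhammer (- of_nat N - of_nat (Suc k)) n * (- of_nat N - of_nat k - 1 + of_nat n)
      = pochhammer (- of_nat N - of_nat k :: complex) n * (- of_nat N - of_nat k - 1)"
    using poch_shift[of "- of_nat N - of_nat k - 1 :: complex" n] by (simp add: algebra_simps)
  have f: "(of_nat (fact n) :: complex) \<noteq> 0" by simp
  define P0 where "P0 = pochhammer (- of_nat N) n * pochhammer \<alpha> n * pochhammer (1+\<alpha>+of_nat N+of_nat k) n"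
  define P1 where "P1 = pochhammer (- of_nat N) n * pochhammer \<alpha> n * pochhammer (1+\<alpha>+of_nat N+of_nat (Suc k)) n"
  define Q0 where "Q0 = (pochhammer (- of_nat N - of_nat k) n * pochhammer (1+\<alpha>+of_nat N) n) * of_nat (fact n)"
  define Q1 where "Q1 = (pochhammer (- of_nat N - of_nat (Suc k)) n * pochhammer (1+\<alpha>+of_nat N) n) * of_nat (fact n)"
  define Y where "Y = (of_nat N + of_nat k + 1 - of_nat n :: complex)"
  define Z where "Z = (of_nat N + of_nat k + 1 :: complex)"
  have t0: "tt \<alpha> N k n = P0 / Q0" unfolding tt_def P0_def Q0_def by simp
  have t1: "tt \<alpha> N (Suc k) n = P1 / Q1" unfolding tt_def P1_def Q1_def by simp
  have e1: "P1 * (1+\<alpha>+of_nat N+of_nat k) = P0 * (1+\<alpha>+of_nat N+of_nat k+of_nat n)"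
    unfolding P0_def P1_def using s1 by (simp add: mult.assoc)
  have e2: "Q1 * Y = Q0 * Z"
  proof -
    have "Q1 * Y = - ((pochhammer (- of_nat N - of_nat (Suc k)) n * (- of_nat N - of_nat k - 1 + of_nat n)) * pochhammer (1+\<alpha>+of_nat N) n * of_nat (fact n))"
      unfolding Q1_def Y_def by (simp add: algebra_simps)
    also have "\<dots> = - ((pochhammer (- of_nat N - of_nat k :: complex) n * (- of_nat N - of_nat k - 1)) * pochhammer (1+\<alpha>+of_nat N) n * of_nat (fact n))"
      unfolding s2 ..
    also have "\<dots> = Q0 * Z" unfolding Q0_def Z_def by (simp add: algebra_simps)
    finally show ?thesis .
  qed
  have q0: "Q0 \<noteq> 0" "Q1 \<noteq> 0" unfolding Q0_def Q1_def using q1 q1' q2 f by auto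
  have yz: "Y \<noteq> 0" unfolding Y_def using q3 by (simp add: algebra_simps)
  have "tt \<alpha> N (Suc k) n * ((1+\<alpha>+of_nat N+of_nat k) * Z) = (P1 * (1+\<alpha>+of_nat N+of_nat k)) * Z / Q1"
    unfolding t1 by (simp add: ac_simps)
  also have "\<dots> = P0 * (1+\<alpha>+of_nat N+of_nat k+of_nat n) * Z / Q1" unfolding e1 ..
  also have "\<dots> = P0 * (1+\<alpha>+of_nat N+of_nat k+of_nat n) * Y / Q0"
  proof -
    have zq: "Z / Q1 = Y / Q0" using e2 q0 by (simp add: frac_eq_eq mult.commute)
    show ?thesis using zq by (metis times_divide_eq_right)
  qed
  also have "\<dots> = tt \<alpha> N k n * ((1+\<alpha>+of_nat N+of_nat k+of_nat n) * Y)"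
    unfolding t0 by simp
  finally show ?thesis unfolding Y_def Z_def .
qed

lemma Lstep: fixes \<alpha> :: complex assumes a: "\<forall>j::nat. \<alpha> \<noteq> - of_nat j"
  shows "SS \<alpha> N (Suc k) * ((1+\<alpha>+of_nat N+of_nat k) * (of_nat N + of_nat k + 1) * (\<alpha> + 2*of_nat k + 2))
    = SS \<alpha> N k * ((1+\<alpha>+of_nat N+of_nat k) * ((of_nat N + of_nat k + 1) * (\<alpha> + 2*of_nat k + 2) - of_nat N * \<alpha>))"
proof -
  define b where "b = 1+\<alpha>+of_nat N"
  define Dr where "Dr = (1+\<alpha>+of_nat N+of_nat k) * ((of_nat N + of_nat k + 1) * (\<alpha> + 2*of_nat k + 2) - of_nat N * \<alpha>)"
  define H where "H n = - tt \<alpha> N k n * (of_nat n * (b + of_nat n - 1) * (of_nat n - of_nat N - of_nat k - 1))" for n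
  have HS: "H (Suc n) = - tt \<alpha> N k n * ((of_nat n - of_nat N) * (\<alpha> + of_nat n) * (1+\<alpha>+of_nat N+of_nat k+of_nat n))"
    if "n \<le> N" for n
  proof (cases "n < N")
    case True
    have "H (Suc n) = - (tt \<alpha> N k (Suc n) * ((of_nat n + 1) * (1+\<alpha>+of_nat N+of_nat n) * (of_nat n - of_nat N - of_nat k)))"
      unfolding H_def b_def by (simp add: algebra_simps)
    then show ?thesis using LA[OF a True, of k] by simp
  next
    case False
    then have "n = N" using that by simp
    then show ?thesis unfolding H_def using LZ[of \<alpha> N k] by simp
  qed
  have trm: "tt \<alpha> N (Suc k) n * ((1+\<alpha>+of_nat N+of_nat k) * (of_nat N + of_nat k + 1) * (\<alpha> + 2*of_nat k + 2))
     = tt \<alpha> N k n * Dr + (H (Suc n) - H n)" if "n \<le> N" for n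
  proof -
    have "tt \<alpha> N (Suc k) n * ((1+\<alpha>+of_nat N+of_nat k) * (of_nat N + of_nat k + 1) * (\<alpha> + 2*of_nat k + 2))
       = (tt \<alpha> N (Suc k) n * ((1+\<alpha>+of_nat N+of_nat k) * (of_nat N + of_nat k + 1))) * (\<alpha> + 2*of_nat k + 2)"
      by (simp add: ac_simps)
    also have "\<dots> = tt \<alpha> N k n * ((1+\<alpha>+of_nat N+of_nat k+of_nat n) * (of_nat N + of_nat k + 1 - of_nat n)) * (\<alpha> + 2*of_nat k + 2)"
      using LB[OF a that, of k] by simp
    also have "\<dots> = tt \<alpha> N k n * Dr + (H (Suc n) - H n)"
      unfolding HS[OF that] unfolding H_def Dr_def b_def by (simp add: algebra_simps)
    finally show ?thesis .
  qed
  have "SS \<alpha> N (Suc k) * ((1+\<alpha>+of_nat N+of_nat k) * (of_nat N + of_nat k + 1) * (\<alpha> + 2*of_nat k + 2))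
     = (\<Sum>n=0..N. tt \<alpha> N k n * Dr + (H (Suc n) - H n))"
    unfolding SS_def sum_distrib_right by (rule sum.cong) (auto simp: trm)
  also have "\<dots> = SS \<alpha> N k * Dr + (H (Suc N) - H 0)"
    unfolding sum.distrib SS_def sum_distrib_right by (subst sum_Suc_diff) auto
  also have "H (Suc N) = 0" using HS[of N] by simp
  also have "H 0 = 0" unfolding H_def by simp
  finally show ?thesis unfolding Dr_def by simp
qed


lemma aux_frac: "(F::complex) \<noteq> 0 \<Longrightarrow> M \<noteq> 0 \<Longrightarrow> p/F + a*p/(F*M) = p*(a+M)/(F*M)"
  by (simp add: field_simps)

lemma poch_shift': "(x::complex) \<noteq> 0 \<Longrightarrow> pochhammer (x+1) n = pochhammer x n * (x + of_nat n) / x"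
  using poch_shift[of x n] by (simp add: eq_divide_eq)

lemma sum_poch_fact: "(\<Sum>n=0..N. pochhammer (\<alpha>::complex) n / of_nat (fact n)) = pochhammer (\<alpha>+1) N / of_nat (fact N)"
proof (induction N)
  case 0
  then show ?case by simp
next
  case (Suc N)
  have f: "(of_nat (fact N) :: complex) \<noteq> 0" "(fact N :: complex) \<noteq> 0" by simp_all
  have q5: "(of_nat N + 1 :: complex) \<noteq> 0" "(1 + of_nat N :: complex) \<noteq> 0" using of_nat_neq_0[of N] by (simp_all add: add.commute)
  have q6: "(fact N + fact N * of_nat N :: complex) \<noteq> 0"
  proof -
    have "(fact N + fact N * of_nat N :: complex) = fact N * (1 + of_nat N)" by (simp add: algebra_simps)
    then show ?thesis using f q5 by simp
  qed
  have "(\<Sum>n=0..Suc N. pochhammer \<alpha> n / of_nat (fact n)) = pochhammer (\<alpha>+1) N / of_nat (fact N)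
      + \<alpha> * pochhammer (\<alpha>+1) N / (of_nat (fact N) * (of_nat N + 1))"
    using Suc by (simp add: pochhammer_rec fact_Suc algebra_simps)
  also have "\<dots> = pochhammer (\<alpha>+1) N * (\<alpha> + 1 + of_nat N) / (of_nat (fact N) * (of_nat N + 1))"
    using aux_frac[OF f(1) q5(1), of "pochhammer (\<alpha>+1) N" \<alpha>] by (simp add: algebra_simps)
  also have "\<dots> = pochhammer (\<alpha>+1) (Suc N) / of_nat (fact (Suc N))"
    by (simp add: pochhammer_rec' fact_Suc algebra_simps)
  finally show ?case .
qed

lemma Lbase: fixes \<alpha> :: complex assumes a: "\<forall>j::nat. \<alpha> \<noteq> - of_nat j"
  shows "SS \<alpha> N 0 = pochhammer (\<alpha>+1) N / of_nat (fact N)"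
proof -
  have "tt \<alpha> N 0 n = pochhammer \<alpha> n / of_nat (fact n)" if "n \<le> N" for n
  proof -
    have q1: "pochhammer (- of_nat N - of_nat 0 :: complex) n \<noteq> 0" using that by (intro nq) simp
    have q2: "pochhammer (1+\<alpha>+of_nat N) n \<noteq> 0" using np a by blast
    show ?thesis using q1 q2 unfolding tt_def by simp
  qed
  then have "SS \<alpha> N 0 = (\<Sum>n=0..N. pochhammer \<alpha> n / of_nat (fact n))"
    unfolding SS_def by (intro sum.cong) auto
  then show ?thesis using sum_poch_fact by simp
qed

definition RR :: "complex \<Rightarrow> nat \<Rightarrow> nat \<Rightarrow> complex" where
 "RR \<alpha> m k = (1 + \<alpha>) * (2 + 2 * of_nat k + \<alpha> + 4 * of_nat m) * pochhammer (2 + \<alpha>) (2 * m)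
           * pochhammer (1 + \<alpha> / 2 + of_nat k) (2 * m)
         / ((2 + \<alpha>) * (1 + 2 * of_nat m + of_nat k) * pochhammer (2 + \<alpha> / 2) (2 * m)
           * pochhammer (1 + of_nat k) (2 * m))"

lemma nz2: fixes \<alpha> :: complex assumes a: "\<forall>j::nat. \<alpha> \<noteq> - of_nat j"
  shows "1 + \<alpha>/2 + of_nat c \<noteq> 0"
proof -
  have ne: "\<alpha> + of_nat (2 + 2*c) \<noteq> 0" by (rule nz[OF a])
  have eq: "1 + \<alpha>/2 + of_nat c = (\<alpha> + of_nat (2 + 2*c)) / 2" by (simp add: field_simps)
  show ?thesis unfolding eq using ne by simp
qed

lemma RR_step: fixes \<alpha> :: complex assumes a: "\<forall>j::nat. \<alpha> \<noteq> - of_nat j"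
  shows "RR \<alpha> m (Suc k) * ((2*of_nat m + of_nat k + 2) * (\<alpha> + 2*of_nat k + 2))
     = RR \<alpha> m k * ((of_nat k + 1) * (\<alpha> + 4*of_nat m + 2*of_nat k + 4))"
proof -
  have n1: "1 + \<alpha>/2 + of_nat k \<noteq> 0" by (rule nz2[OF a])
  have n2: "pochhammer (2 + \<alpha>/2) (2*m) \<noteq> 0"
  proof
    assume "pochhammer (2 + \<alpha>/2) (2*m) = 0"
    then have "\<exists>j<2*m. 2 + \<alpha>/2 = - of_nat j" by (simp only: pochhammer_eq_0_iff)
    then obtain j where "2 + \<alpha>/2 = - of_nat j" by blast
    then have "1 + \<alpha>/2 + of_nat (Suc j) = 0" by (simp add: algebra_simps)
    with nz2[OF a, of "Suc j"] show False by simp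
  qed
  have n3: "pochhammer (1 + of_nat k :: complex) (2*m) \<noteq> 0"
  proof
    assume "pochhammer (1 + of_nat k :: complex) (2*m) = 0"
    then have "\<exists>j<2*m. (1 + of_nat k :: complex) = - of_nat j" by (simp only: pochhammer_eq_0_iff)
    then obtain j where "(1 + of_nat k :: complex) = - of_nat j" by blast
    then have "(1 + of_nat k) + of_nat j = (0::complex)" using eq_neg_iff_add_eq_0 by blast
    moreover have "(of_nat (1 + k + j) :: complex) = (1 + of_nat k) + of_nat j" by (simp only: of_nat_add of_nat_1)
    ultimately have "(of_nat (1 + k + j) :: complex) = 0" by simp
    then show False by (simp only: of_nat_eq_0_iff)
  qed
  have n4: "(2 + \<alpha>) \<noteq> 0" using nz[OF a, of 2] by (simp add: add.commute)
  have n5: "(1 + 2 * of_nat m + of_nat k :: complex) \<noteq> 0"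
    using of_nat_neq_0[of "2*m+k", where 'a=complex] by (simp add: algebra_simps)
  have n6: "(2 * of_nat m + of_nat k + 2 :: complex) \<noteq> 0"
    using of_nat_neq_0[of "2*m+k+1", where 'a=complex] by (simp add: algebra_simps)
  have n7: "(of_nat k + 1 :: complex) \<noteq> 0" using of_nat_neq_0[of k] by (simp add: add.commute)
  have pa: "pochhammer (1 + \<alpha>/2 + of_nat (Suc k)) (2*m) = pochhammer (1 + \<alpha>/2 + of_nat k) (2*m) * (1 + \<alpha>/2 + of_nat k + of_nat (2*m)) / (1 + \<alpha>/2 + of_nat k)"
  proof -
    have "1 + \<alpha>/2 + of_nat (Suc k) = (1 + \<alpha>/2 + of_nat k) + 1" by simp
    then show ?thesis using poch_shift'[OF n1, of "2*m"] by simp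
  qed
  have pb: "pochhammer (1 + of_nat (Suc k)) (2*m) = pochhammer (1 + of_nat k :: complex) (2*m) * (1 + of_nat k + of_nat (2*m)) / (1 + of_nat k)"
  proof -
    have n7': "(1 + of_nat k :: complex) \<noteq> 0" using n7 by (simp add: add.commute)
    have "(1 + of_nat (Suc k) :: complex) = (1 + of_nat k) + 1" by simp
    then show ?thesis using poch_shift'[OF n7', of "2*m"] by simp
  qed
  define A where "A = pochhammer (1 + \<alpha>/2 + of_nat k) (2*m)"
  define A1 where "A1 = pochhammer (1 + \<alpha>/2 + of_nat (Suc k)) (2*m)"
  define E where "E = pochhammer (1 + of_nat k :: complex) (2*m)"
  define E1 where "E1 = pochhammer (1 + of_nat (Suc k) :: complex) (2*m)"
  define C where "C = pochhammer (2 + \<alpha>/2) (2*m)"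
  define P where "P = pochhammer (2 + \<alpha>) (2*m)"
  define \<beta> where "\<beta> = \<alpha>/2"
  have ab: "\<alpha> = 2*\<beta>" unfolding \<beta>_def by simp
  have sa: "A1 * (1 + \<beta> + of_nat k) = A * (1 + \<beta> + of_nat k + 2 * of_nat m)"
    unfolding A1_def A_def \<beta>_def using poch_shift[of "1 + \<alpha>/2 + of_nat k" "2*m"] by (simp add: algebra_simps)
  have se: "E1 * (1 + of_nat k) = E * (1 + of_nat k + 2 * of_nat m)"
    unfolding E1_def E_def using poch_shift[of "1 + of_nat k :: complex" "2*m"] by (simp add: algebra_simps)
  have r1: "RR \<alpha> m (Suc k) = ((1 + \<alpha>) * (2 + 2 * of_nat (Suc k) + \<alpha> + 4 * of_nat m) * P * A1)
         / ((2 + \<alpha>) * (1 + 2 * of_nat m + of_nat (Suc k)) * C * E1)"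
    unfolding RR_def A1_def E1_def C_def P_def ..
  have r2: "RR \<alpha> m k = ((1 + \<alpha>) * (2 + 2 * of_nat k + \<alpha> + 4 * of_nat m) * P * A)
         / ((2 + \<alpha>) * (1 + 2 * of_nat m + of_nat k) * C * E)"
    unfolding RR_def A_def E_def C_def P_def ..
  have cz: "C \<noteq> 0" "E \<noteq> 0" unfolding C_def E_def using n2 n3 by auto
  have n7': "(1 + of_nat k :: complex) \<noteq> 0" using n7 by (simp add: add.commute)
  have e1z: "E1 \<noteq> 0"
  proof
    assume "E1 = 0"
    then have "E * (1 + of_nat k + 2 * of_nat m) = 0" using se by simp
    moreover have "(1 + of_nat k + 2 * of_nat m :: complex) \<noteq> 0" using n5 by (simp add: algebra_simps)
    ultimately show False using cz by simp
  qed
  have n6': "(1 + 2 * of_nat m + of_nat (Suc k) :: complex) \<noteq> 0" using n6 by (simp add: algebra_simps)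
  have D0: "(2 + \<alpha>) * (1 + 2 * of_nat m + of_nat k) * C * E \<noteq> 0" using n4 n5 cz by simp
  have D1: "(2 + \<alpha>) * (1 + 2 * of_nat m + of_nat (Suc k)) * C * E1 \<noteq> 0" using n4 n6' cz e1z by simp
  have u0: "1 + \<beta> + of_nat k \<noteq> 0" using n1 unfolding \<beta>_def .
  have key: "((1 + \<alpha>) * (2 + 2 * of_nat (Suc k) + \<alpha> + 4 * of_nat m) * P * A1) * ((2*of_nat m + of_nat k + 2) * (\<alpha> + 2*of_nat k + 2))
      * ((2 + \<alpha>) * (1 + 2 * of_nat m + of_nat k) * C * E)
    = ((1 + \<alpha>) * (2 + 2 * of_nat k + \<alpha> + 4 * of_nat m) * P * A) * ((of_nat k + 1) * (\<alpha> + 4*of_nat m + 2*of_nat k + 4))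
      * ((2 + \<alpha>) * (1 + 2 * of_nat m + of_nat (Suc k)) * C * E1)"
    unfolding ab of_nat_Suc using sa se u0 n7' by algebra
  show ?thesis unfolding r1 r2 using key D0 D1
    by (simp add: frac_eq_eq divide_simps)
qed


lemma RR_base: fixes \<alpha> :: complex assumes a: "\<forall>j::nat. \<alpha> \<noteq> - of_nat j"
  shows "RR \<alpha> m 0 = pochhammer (\<alpha>+1) (2*m+1) / of_nat (fact (2*m+1))"
proof -
  define A where "A = pochhammer (1 + \<alpha>/2) (2*m)"
  define C where "C = pochhammer (2 + \<alpha>/2) (2*m)"
  define P where "P = pochhammer (2 + \<alpha>) (2*m)"
  define F where "F = (fact (2*m) :: complex)"
  define \<beta> where "\<beta> = \<alpha>/2"
  have ab: "\<alpha> = 2*\<beta>" unfolding \<beta>_def by simp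
  have sa: "C * (1 + \<beta>) = A * (1 + \<beta> + 2 * of_nat m)"
    unfolding C_def A_def \<beta>_def using poch_shift[of "1 + \<alpha>/2" "2*m"] by (simp add: algebra_simps)
  have r1: "RR \<alpha> m 0 = ((1 + \<alpha>) * (2 + \<alpha> + 4 * of_nat m) * P * A) / ((2 + \<alpha>) * (1 + 2 * of_nat m) * C * F)"
    unfolding RR_def A_def C_def P_def F_def by (simp add: pochhammer_fact)
  have r2: "pochhammer (\<alpha>+1) (2*m+1) / of_nat (fact (2*m+1)) = ((\<alpha>+1) * P) / ((2 * of_nat m + 1) * F)"
    unfolding P_def F_def by (simp add: pochhammer_rec fact_Suc algebra_simps)
  have n1: "1 + \<alpha>/2 + of_nat 0 \<noteq> 0" by (rule nz2[OF a])
  have n2: "C \<noteq> 0" unfolding C_def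
  proof
    assume "pochhammer (2 + \<alpha>/2) (2*m) = 0"
    then have "\<exists>j<2*m. 2 + \<alpha>/2 = - of_nat j" by (simp only: pochhammer_eq_0_iff)
    then obtain j where "2 + \<alpha>/2 = - of_nat j" by blast
    then have "1 + \<alpha>/2 + of_nat (Suc j) = 0" by (simp add: algebra_simps)
    with nz2[OF a, of "Suc j"] show False by simp
  qed
  have n4: "(2 + \<alpha>) \<noteq> 0" using nz[OF a, of 2] by (simp add: add.commute)
  have n5: "(1 + 2 * of_nat m :: complex) \<noteq> 0" "(2 * of_nat m + 1 :: complex) \<noteq> 0"
    using of_nat_neq_0[of "2*m", where 'a=complex] by (simp_all add: algebra_simps)
  have fz: "F \<noteq> 0" unfolding F_def by simp
  have D0: "(2 + \<alpha>) * (1 + 2 * of_nat m) * C * F \<noteq> 0" using n4 n5 n2 fz by simp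
  have D1: "(2 * of_nat m + 1) * F \<noteq> 0" using n5 fz by simp
  have u0: "1 + \<beta> \<noteq> 0" using n1 unfolding \<beta>_def by simp
  have key: "((1 + \<alpha>) * (2 + \<alpha> + 4 * of_nat m) * P * A) * ((2 * of_nat m + 1) * F)
     = ((\<alpha>+1) * P) * ((2 + \<alpha>) * (1 + 2 * of_nat m) * C * F)"
    unfolding ab using sa u0 by algebra
  show ?thesis unfolding r1 r2 using key D0 D1 by (simp add: frac_eq_eq)
qed

lemma SS_RR: fixes \<alpha> :: complex assumes a: "\<forall>j::nat. \<alpha> \<noteq> - of_nat j"
  shows "SS \<alpha> (2*m+1) k = RR \<alpha> m k"
proof (induction k)
  case 0
  show ?case using Lbase[OF a, of "2*m+1"] RR_base[OF a, of m] by simp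
next
  case (Suc k)
  define N where "N = 2*m+1"
  define X where "X = (2*of_nat m + of_nat k + 2) * (\<alpha> + 2*of_nat k + 2)"
  define Y where "Y = (of_nat k + 1) * (\<alpha> + 4*of_nat m + 2*of_nat k + 4)"
  define B where "B = 1+\<alpha>+of_nat N+of_nat k"
  have dx: "(1+\<alpha>+of_nat N+of_nat k) * (of_nat N + of_nat k + 1) * (\<alpha> + 2*of_nat k + 2) = B * X"
    unfolding B_def X_def N_def by (simp add: algebra_simps)
  have dy: "(1+\<alpha>+of_nat N+of_nat k) * ((of_nat N + of_nat k + 1) * (\<alpha> + 2*of_nat k + 2) - of_nat N * \<alpha>) = B * Y"
    unfolding B_def Y_def N_def by (simp add: algebra_simps)
  have L: "SS \<alpha> N (Suc k) * (B * X) = SS \<alpha> N k * (B * Y)"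
    using Lstep[OF a, of N k] unfolding dx dy .
  have R: "RR \<alpha> m (Suc k) * X = RR \<alpha> m k * Y" unfolding X_def Y_def by (rule RR_step[OF a])
  have bz: "B \<noteq> 0" unfolding B_def using nz[OF a, of "1+N+k"] by (simp add: algebra_simps)
  have xz: "X \<noteq> 0" unfolding X_def
  proof -
    have "(2*of_nat m + of_nat k + 2 :: complex) \<noteq> 0"
      using of_nat_neq_0[of "2*m+k+1", where 'a=complex] by (simp add: algebra_simps)
    moreover have "\<alpha> + 2*of_nat k + 2 \<noteq> 0" using nz[OF a, of "2*k+2"] by (simp add: algebra_simps)
    ultimately show "(2*of_nat m + of_nat k + 2) * (\<alpha> + 2*of_nat k + 2) \<noteq> 0" by simp
  qed
  have "SS \<alpha> N (Suc k) * (B * X) = RR \<alpha> m (Suc k) * (B * X)"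
    using L R Suc unfolding N_def by (simp add: ac_simps)
  then show ?case using bz xz unfolding N_def by simp
qed

lemma hyp_SS: "hyp3F2_trunc (- 2 * of_nat m - 1) \<alpha> (2 + \<alpha> + 2 * of_nat m + of_nat k)
           (- 2 * of_nat m - of_nat k - 1) (2 + \<alpha> + 2 * of_nat m) 1 (2 * m + 1) = SS \<alpha> (2*m+1) k"
proof -
  have e1: "(- 2 * of_nat m - 1 :: complex) = - of_nat (2*m+1)" by simp
  have e2: "(2 + \<alpha> + 2 * of_nat m + of_nat k) = 1 + \<alpha> + of_nat (2*m+1) + of_nat k" by simp
  have e3: "(- 2 * of_nat m - of_nat k - 1 :: complex) = - of_nat (2*m+1) - of_nat k" by simp
  have e4: "(2 + \<alpha> + 2 * of_nat m) = 1 + \<alpha> + of_nat (2*m+1)" by simp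
  show ?thesis unfolding hyp3F2_trunc_def e1 e2 e3 e4 SS_def tt_def by simp
qed


theorem mainTheorem15:
  fixes m k :: nat and \<alpha> :: complex
  assumes "m \<ge> 1" and "k \<ge> 1"
    and "\<not> nonpos_int \<alpha>"
    and "\<not> nonpos_int (2 + \<alpha> + 2 * of_nat m + of_nat k)"
    and "\<not> nonpos_int (2 + \<alpha> + 2 * of_nat m)"
  shows "hyp3F2_trunc (- 2 * of_nat m - 1) \<alpha> (2 + \<alpha> + 2 * of_nat m + of_nat k)
           (- 2 * of_nat m - of_nat k - 1) (2 + \<alpha> + 2 * of_nat m) 1 (2 * m + 1)
       = (1 + \<alpha>) * (2 + 2 * of_nat k + \<alpha> + 4 * of_nat m) * pochhammer (2 + \<alpha>) (2 * m)
           * pochhammer (1 + \<alpha> / 2 + of_nat k) (2 * m)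
         / ((2 + \<alpha>) * (1 + 2 * of_nat m + of_nat k) * pochhammer (2 + \<alpha> / 2) (2 * m)
           * pochhammer (1 + of_nat k) (2 * m))"
  proof -
  have a: "\<forall>j::nat. \<alpha> \<noteq> - of_nat j" using assms(3) unfolding nonpos_int_def by blast
  show ?thesis unfolding hyp_SS SS_RR[OF a] RR_def ..
qed

end
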